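(* For every $\delta\in\mathcal{D}^{LSL}$, Spearman's rho of the lower semilinear copula $S_\delta$ is $$\rho(S_\delta)=12\int_{[0,1]}\delta(x)\,x\,d\lambda(x)-3.$$
   Context: $\lambda$ is Lebesgue measure on $[0,1]$, $\lambda_2$ on $[0,1]^2$. Let $\mathcal{D}$ be the set of all functions $\delta:[0,1]\to[0,1]$ with $\delta(u)\le u$, $\delta(1)=1$, $\delta$ non-decreasing and 2-Lipschitz. Let $\mathcal{D}^{LSL}$ be the set of $\delta\in\mathcal{D}$ such that $x\mapsto\delta(x)/x$ is non-decreasing and $x\mapsto\delta(x)/x^2$ is non-increasing on $(0,1]$. For $\delta\in\mathcal{D}^{LSL}$, $S_\delta(x,y)=y\,\delta(x)/x$ if $y\le x$ and $x\,\delta(y)/y$ otherwise (convention $0/0:=0$); it is a copula. For a copula $C$, Spearman's rho is $\rho(C)=12\int_{[0,1]^2}C\,d\lambda_2-3$. *)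

theory Defs
  imports "HOL-Analysis.Analysis"
begin

definition diag_D :: "(real \<Rightarrow> real) set" where
  "diag_D = {\<delta>. (\<forall>u\<in>{0..1}. \<delta> u \<in> {0..1} \<and> \<delta> u \<le> u) \<and> \<delta> 1 = 1
      \<and> mono_on {0..1} \<delta> \<and> lipschitz_on 2 {0..1} \<delta>}"

definition diag_D_LSL :: "(real \<Rightarrow> real) set" where
  "diag_D_LSL = {\<delta> \<in> diag_D. mono_on {0<..1} (\<lambda>x. \<delta> x / x)
      \<and> antimono_on {0<..1} (\<lambda>x. \<delta> x / x ^ 2)}"

text \<open>Lower semilinear copula; note x / 0 = 0 in Isabelle, matching 0/0 := 0.\<close>
definition S_LSL :: "(real \<Rightarrow> real) \<Rightarrow> real \<Rightarrow> real \<Rightarrow> real" where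
  "S_LSL \<delta> x y = (if y \<le> x then y * (\<delta> x / x) else x * (\<delta> y / y))"

definition spearman_rho :: "(real \<Rightarrow> real \<Rightarrow> real) \<Rightarrow> real" where
  "spearman_rho C = 12 * (LINT z : {0..1} \<times> {0..1} | lborel. C (fst z) (snd z)) - 3"

end

theory Submission
  imports Defs
begin

lemma sq_fin: "emeasure (lborel \<Otimes>\<^sub>M lborel) ({0..1::real} \<times> {0..1::real}) = 1"
  by (simp add: lborel.emeasure_pair_measure_Times)

theorem mainTheorem6:
  assumes "\<delta> \<in> diag_D_LSL"
  shows "spearman_rho (S_LSL \<delta>) = 12 * (LINT x : {0..1} | lborel. \<delta> x * x) - 3"
proof -
  have D: "\<delta> \<in> diag_D" using assms by (simp add: diag_D_LSL_def)
  have bnd: "\<And>u. u \<in> {0..1} \<Longrightarrow> 0 \<le> \<delta> u \<and> \<delta> u \<le> u" using D by (auto simp: diag_D_def)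
  have cont: "continuous_on {0..1} \<delta>"
    using D lipschitz_on_continuous_on by (auto simp: diag_D_def)
  define c :: "real \<Rightarrow> real" where "c x = max 0 (min 1 x)" for x
  define d where "d x = \<delta> (c x)" for x
  have cc: "continuous_on UNIV c" unfolding c_def by (intro continuous_intros)
  have cr: "c ` UNIV \<subseteq> {0..1}" by (auto simp: c_def)
  have "continuous_on UNIV d" unfolding d_def
    using continuous_on_compose2[OF cont cc cr] by simp
  then have dm[measurable]: "d \<in> borel_measurable borel" by (rule borel_measurable_continuous_onI)
  have dx: "\<And>x. x \<in> {0..1} \<Longrightarrow> d x = \<delta> x" by (simp add: d_def c_def)
  have dq: "\<And>x. 0 \<le> x \<Longrightarrow> x \<le> 1 \<Longrightarrow> 0 \<le> d x / x \<and> d x / x \<le> 1"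
  proof -
    fix x :: real assume "0 \<le> x" "x \<le> 1"
    then have "0 \<le> d x" "d x \<le> x" using bnd dx by auto
    then show "0 \<le> d x / x \<and> d x / x \<le> 1"
      by (cases "x = 0") (auto simp: divide_simps)
  qed
  define A where "A x y = (if 0 \<le> y \<and> y \<le> x \<and> x \<le> 1 then y * (d x / x) else 0)" for x y :: real
  define B where "B x y = (if 0 \<le> x \<and> x < y \<and> y \<le> 1 then x * (d y / y) else 0)" for x y :: real
  have Am[measurable]: "case_prod A \<in> borel_measurable (lborel \<Otimes>\<^sub>M lborel)"
    unfolding A_def by measurable
  have Bm[measurable]: "case_prod B \<in> borel_measurable (lborel \<Otimes>\<^sub>M lborel)"
    unfolding B_def by measurable
  have sqm: "{0..1::real} \<times> {0..1::real} \<in> sets (lborel \<Otimes>\<^sub>M lborel)" by simp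
  have Iint: "integrable (lborel \<Otimes>\<^sub>M lborel) (indicator ({0..1::real} \<times> {0..1::real}) :: _ \<Rightarrow> real)"
    using sq_fin sqm by (intro integrable_real_indicator) auto
  have Aint: "integrable (lborel \<Otimes>\<^sub>M lborel) (case_prod A)"
  proof (rule Bochner_Integration.integrable_bound[OF Iint Am])
    show "AE z in lborel \<Otimes>\<^sub>M lborel. norm (case_prod A z) \<le> norm (indicator ({0..1::real} \<times> {0..1::real}) z :: real)"
    proof (rule AE_I2, clarify)
      fix x y :: real
      show "norm (A x y) \<le> norm (indicator ({0..1::real} \<times> {0..1::real}) (x, y) :: real)"
      proof (cases "0 \<le> y \<and> y \<le> x \<and> x \<le> 1")
        case True
        then have "0 \<le> d x / x" "d x / x \<le> 1" using dq[of x] by auto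
        moreover have "y \<le> 1" "0 \<le> y" using True by auto
        ultimately have "0 \<le> y * (d x / x)" "y * (d x / x) \<le> 1"
          by (metis mult_nonneg_nonneg, metis mult_le_one)
        then show ?thesis using True by (simp add: A_def indicator_def)
      qed (auto simp: A_def)
    qed
  qed
  have Bint: "integrable (lborel \<Otimes>\<^sub>M lborel) (case_prod B)"
  proof (rule Bochner_Integration.integrable_bound[OF Iint Bm])
    show "AE z in lborel \<Otimes>\<^sub>M lborel. norm (case_prod B z) \<le> norm (indicator ({0..1::real} \<times> {0..1::real}) z :: real)"
    proof (rule AE_I2, clarify)
      fix x y :: real
      show "norm (B x y) \<le> norm (indicator ({0..1::real} \<times> {0..1::real}) (x, y) :: real)"
      proof (cases "0 \<le> x \<and> x < y \<and> y \<le> 1")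
        case True
        then have "0 \<le> d y / y" "d y / y \<le> 1" using dq[of y] by auto
        moreover have "x \<le> 1" "0 \<le> x" using True by auto
        ultimately have "0 \<le> x * (d y / y)" "x * (d y / y) \<le> 1"
          by (metis mult_nonneg_nonneg, metis mult_le_one)
        moreover have "0 \<le> d y" using dx bnd True by auto
        ultimately show ?thesis using True by (simp add: B_def indicator_def)
      qed (auto simp: B_def)
    qed
  qed
  define g where "g x = indicator {0..1} x * (d x * x / 2)" for x :: real
  have innerA: "(\<integral>y. A x y \<partial>lborel) = g x" for x
  proof (cases "0 \<le> x \<and> x \<le> 1")
    case True
    have "(\<lambda>y. A x y) = (\<lambda>y. (d x / x) * (y ^ 1 * indicator {0..x} y))"
      by (rule ext) (auto simp: A_def indicator_def True)
    then have "(\<integral>y. A x y \<partial>lborel) = (d x / x) * (\<integral>y. y ^ 1 * indicator {0..x} y \<partial>lborel)"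
      by (simp only: Bochner_Integration.integral_mult_right_zero)
    also have "\<dots> = (d x / x) * (x ^ 2 / 2)"
    proof -
      have "(\<integral>y. y ^ 1 * indicator {0..x} y \<partial>lborel) = x ^ 2 / 2"
        using integral_power[of 0 x 1] True by (simp add: power2_eq_square)
      then show ?thesis by (simp only:)
    qed
    also have "\<dots> = g x" using True by (simp add: g_def power2_eq_square)
    finally show ?thesis .
  next
    case False
    then have "(\<lambda>y. A x y) = (\<lambda>y. 0)" by (auto simp: A_def)
    then show ?thesis using False by (simp add: g_def)
  qed
  have innerB: "(\<integral>x. B x y \<partial>lborel) = g y" for y
  proof (cases "0 \<le> y \<and> y \<le> 1")
    case True
    have "(\<integral>x. B x y \<partial>lborel) = (\<integral>x. (d y / y) * (x ^ 1 * indicator {0..y} x) \<partial>lborel)"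
    proof (rule integral_cong_AE)
      show "AE x in lborel. B x y = (d y / y) * (x ^ 1 * indicator {0..y} x)"
        using AE_lborel_singleton[of y]
        by eventually_elim (auto simp: B_def indicator_def True)
    qed (auto simp: B_def)
    also have "\<dots> = (d y / y) * (\<integral>x. x ^ 1 * indicator {0..y} x \<partial>lborel)"
      by (simp only: Bochner_Integration.integral_mult_right_zero)
    also have "\<dots> = (d y / y) * (y ^ 2 / 2)"
    proof -
      have "(\<integral>x. x ^ 1 * indicator {0..y} x \<partial>lborel) = y ^ 2 / 2"
        using integral_power[of 0 y 1] True by (simp add: power2_eq_square)
      then show ?thesis by (simp only:)
    qed
    also have "\<dots> = g y" using True by (simp add: g_def power2_eq_square)
    finally show ?thesis .
  next
    case False
    then have "(\<lambda>x. B x y) = (\<lambda>x. 0)" by (auto simp: B_def)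
    then show ?thesis using False by (simp add: g_def)
  qed
  have eqS: "indicator ({0..1} \<times> {0..1}) z *\<^sub>R S_LSL \<delta> (fst z) (snd z) = case_prod A z + case_prod B z" for z :: "real \<times> real"
  proof (cases z)
    case (Pair x y)
    show ?thesis
      by (auto simp: Pair A_def B_def S_LSL_def indicator_def dx)
  qed
  have "(LINT z : {0..1} \<times> {0..1} | lborel. S_LSL \<delta> (fst z) (snd z))
      = integral\<^sup>L (lborel \<Otimes>\<^sub>M lborel) (\<lambda>z. case_prod A z + case_prod B z)"
    unfolding set_lebesgue_integral_def lborel_prod eqS ..
  also have "\<dots> = integral\<^sup>L (lborel \<Otimes>\<^sub>M lborel) (case_prod A) + integral\<^sup>L (lborel \<Otimes>\<^sub>M lborel) (case_prod B)"
    using Aint Bint by (rule Bochner_Integration.integral_add)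
  also have "\<dots> = (\<integral>x. g x \<partial>lborel) + (\<integral>y. g y \<partial>lborel)"
    using lborel_pair.integral_fst[OF Aint] lborel_pair.integral_snd[OF Bint] innerA innerB
    by simp
  also have "(\<integral>x. g x \<partial>lborel) = (LINT x : {0..1} | lborel. \<delta> x * x) / 2"
  proof -
    have "(\<integral>x. g x \<partial>lborel) = (\<integral>x. indicator {0..1} x *\<^sub>R (\<delta> x * x) / 2 \<partial>lborel)"
      by (rule Bochner_Integration.integral_cong) (auto simp: g_def indicator_def dx)
    also have "\<dots> = (LINT x : {0..1} | lborel. \<delta> x * x) / 2"
      unfolding set_lebesgue_integral_def by simp
    finally show ?thesis .
  qed
  finally show ?thesis unfolding spearman_rho_def by simp
qed

end
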